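(* Let $A=(a_{ij})\in\mathcal{B}^{m,n}$ and let $k$ be a field. Let $k[A]=k[x_{ij} : a_{ij}=1]$ and let $A[x]$ be the $m\times n$ matrix over $k[A]$ with $A[x]_{ij}=x_{ij}$ if $a_{ij}=1$ and $0$ otherwise. For $t\geq 1$ let $I_t(A[x])\subseteq k[A]$ be the ideal generated by all $t\times t$ minors of $A[x]$. If for some integer $s\geq 2$ the monomial $x_{i_1j_1}\cdots x_{i_sj_s}$ (a product of variables of $k[A]$) lies in $I_s(A[x])$, then $\{a_{i_kj_k} : 1\leq k\leq s\}$ is an isolated set of $A$.
   Context: $\mathcal{B}^{m,n}$ denotes $m\times n$ matrices with entries in the Boolean semiring $\{0,1\}$ with $\vee$ (or), $\wedge$ (and). A pair of entries $\{a_{ij},a_{k\ell}\}$ is isolated if $a_{ij}=a_{k\ell}=1$ and $a_{i\ell}\wedge a_{kj}=0$. A subset $T$ of the entries of $A$ equal to $1$ is an isolated set if it has size one or every pair of its elements is isolated. *)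

theory Defs
  imports "HOL-Library.Poly_Mapping" "Jordan_Normal_Form.DL_Submatrix" "Jordan_Normal_Form.Determinant"
begin

text \<open>A Boolean m x n matrix is a predicate A :: nat => nat => bool, read on
  indices i < m, j < n (0-based).\<close>

type_synonym 'k mpoly = "((nat \<times> nat) \<Rightarrow>\<^sub>0 nat) \<Rightarrow>\<^sub>0 'k"

definition isolated_pair :: "(nat \<Rightarrow> nat \<Rightarrow> bool) \<Rightarrow> nat \<times> nat \<Rightarrow> nat \<times> nat \<Rightarrow> bool" where
  "isolated_pair A p q \<longleftrightarrow> (case p of (i, j) \<Rightarrow> case q of (k, l) \<Rightarrow>
      A i j \<and> A k l \<and> \<not> (A i l \<and> A k j))"

definition isolated_set :: "(nat \<Rightarrow> nat \<Rightarrow> bool) \<Rightarrow> nat \<Rightarrow> nat \<Rightarrow> (nat \<times> nat) set \<Rightarrow> bool" where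
  "isolated_set A m n T \<longleftrightarrow>
     T \<subseteq> {(i, j). i < m \<and> j < n \<and> A i j} \<and>
     (card T = 1 \<or> (\<forall>p\<in>T. \<forall>q\<in>T. p \<noteq> q \<longrightarrow> isolated_pair A p q))"

definition var :: "nat \<Rightarrow> nat \<Rightarrow> 'k::comm_ring_1 mpoly" where
  "var i j = Poly_Mapping.single (Poly_Mapping.single (i, j) 1) 1"

definition in_kA :: "(nat \<Rightarrow> nat \<Rightarrow> bool) \<Rightarrow> nat \<Rightarrow> nat \<Rightarrow> 'k::comm_ring_1 mpoly \<Rightarrow> bool" where
  "in_kA A m n p \<longleftrightarrow> (\<forall>mon \<in> Poly_Mapping.keys p. Poly_Mapping.keys mon \<subseteq> {(i, j). i < m \<and> j < n \<and> A i j})"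

definition gen_mat :: "(nat \<Rightarrow> nat \<Rightarrow> bool) \<Rightarrow> nat \<Rightarrow> nat \<Rightarrow> 'k::comm_ring_1 mpoly mat" where
  "gen_mat A m n = mat m n (\<lambda>(i, j). if A i j then var i j else 0)"

definition minors :: "nat \<Rightarrow> 'a::comm_ring_1 mat \<Rightarrow> 'a set" where
  "minors t M = {det (submatrix M R C) | R C.
      R \<subseteq> {..<dim_row M} \<and> C \<subseteq> {..<dim_col M} \<and> card R = t \<and> card C = t}"

definition I_t :: "(nat \<Rightarrow> nat \<Rightarrow> bool) \<Rightarrow> nat \<Rightarrow> nat \<Rightarrow> nat \<Rightarrow> 'k::comm_ring_1 mpoly set" where
  "I_t A m n t = {p. \<exists>F c. finite F \<and> F \<subseteq> minors t (gen_mat A m n) \<and>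
       (\<forall>g\<in>F. in_kA A m n (c g)) \<and> p = (\<Sum>g\<in>F. c g * g)}"

end

theory Submission
  imports Defs
begin

definition ee :: "nat \<times> nat \<Rightarrow> (nat \<times> nat) \<Rightarrow>\<^sub>0 nat" where
  "ee x = Poly_Mapping.single x 1"

definition mdeg :: "((nat \<times> nat) \<Rightarrow>\<^sub>0 nat) \<Rightarrow> nat" where
  "mdeg \<mu> = (\<Sum>k\<in>Poly_Mapping.keys \<mu>. Poly_Mapping.lookup \<mu> k)"

lemma mdeg_alt: "finite S \<Longrightarrow> Poly_Mapping.keys \<mu> \<subseteq> S \<Longrightarrow> mdeg \<mu> = (\<Sum>k\<in>S. Poly_Mapping.lookup \<mu> k)"
  unfolding mdeg_def by (rule sum.mono_neutral_left) (auto simp: in_keys_iff)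

lemma mdeg_add: "mdeg (a + b) = mdeg a + mdeg b"
proof -
  let ?S = "Poly_Mapping.keys a \<union> Poly_Mapping.keys b"
  have "mdeg (a+b) = (\<Sum>k\<in>?S. Poly_Mapping.lookup (a+b) k)"
    by (rule mdeg_alt) (auto simp: Poly_Mapping.keys_add intro: set_mp[OF Poly_Mapping.keys_add])
  also have "\<dots> = (\<Sum>k\<in>?S. Poly_Mapping.lookup a k) + (\<Sum>k\<in>?S. Poly_Mapping.lookup b k)"
    by (simp add: lookup_add sum.distrib)
  also have "\<dots> = mdeg a + mdeg b"
    using mdeg_alt[of ?S a] mdeg_alt[of ?S b] by simp
  finally show ?thesis .
qed

lemma mdeg_zero_iff: "mdeg a = 0 \<longleftrightarrow> a = 0"
  unfolding mdeg_def by (auto simp: in_keys_iff intro!: poly_mapping_eqI)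

lemma mdeg_ee[simp]: "mdeg (ee x) = 1"
  by (simp add: mdeg_def ee_def)

lemma mdeg_sum: "mdeg (sum f S) = (\<Sum>x\<in>S. mdeg (f x))"
  by (induction S rule: infinite_finite_induct) (auto simp: mdeg_add mdeg_zero_iff)

lemma lookup_mult_single_hom:
  fixes c :: "'k::comm_ring_1 mpoly"
  assumes "mdeg \<nu> = mdeg \<mu>"
  shows "Poly_Mapping.lookup (c * Poly_Mapping.single \<nu> a) \<mu> = (if \<nu> = \<mu> then Poly_Mapping.lookup c 0 * a else 0)"
proof -
  have "Poly_Mapping.lookup (c * Poly_Mapping.single \<nu> a) \<mu> = Sum_any (\<lambda>l. Poly_Mapping.lookup c l * (a when \<mu> = l + \<nu>))"
  proof -
    have inner: "Sum_any (\<lambda>q. (if \<mu> = l + q then (if \<nu> = q then a else 0) else 0))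
         = (a when \<mu> = l + \<nu>)" for l
    proof -
      have "Sum_any (\<lambda>q. (if \<mu> = l + q then (if \<nu> = q then a else 0) else 0))
          = Sum_any (\<lambda>q. ((a when \<mu> = l + \<nu>) when q = \<nu>))"
        by (rule Sum_any.cong) (auto simp: when_def)
      then show ?thesis by simp
    qed
    show ?thesis unfolding lookup_mult by (simp add: lookup_single when_def inner)
  qed
  also have "\<dots> = Sum_any (\<lambda>l. ((if \<nu> = \<mu> then Poly_Mapping.lookup c 0 * a else 0) when l = (0::(nat \<times> nat) \<Rightarrow>\<^sub>0 nat)))"
  proof (rule arg_cong[where f = Sum_any], rule ext)
    fix l
    show "Poly_Mapping.lookup c l * (a when \<mu> = l + \<nu>) = ((if \<nu> = \<mu> then Poly_Mapping.lookup c 0 * a else 0) when l = 0)"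
    proof (cases "\<mu> = l + \<nu>")
      case True
      then have "mdeg l = 0" using assms by (simp add: mdeg_add)
      then have "l = 0" by (simp add: mdeg_zero_iff)
      then show ?thesis using True by auto
    next
      case False
      then show ?thesis by (auto simp: when_def)
    qed
  qed
  also have "\<dots> = (if \<nu> = \<mu> then Poly_Mapping.lookup c 0 * a else 0)" by simp
  finally show ?thesis .
qed


lemma pm_add_cancel: "(a::(nat \<times> nat) \<Rightarrow>\<^sub>0 nat) + x = b + x \<Longrightarrow> a = b"
  by (rule poly_mapping_eqI) (metis add_right_cancel lookup_add)

definition pmon :: "(nat \<Rightarrow> nat) \<Rightarrow> (nat \<Rightarrow> nat) \<Rightarrow> nat \<Rightarrow> (nat \<Rightarrow> nat) \<Rightarrow> (nat \<times> nat) \<Rightarrow>\<^sub>0 nat" where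
  "pmon \<rho> \<gamma> t p = (\<Sum>a<t. ee (\<rho> a, \<gamma> (p a)))"

definition pres :: "(nat \<Rightarrow> nat \<Rightarrow> bool) \<Rightarrow> (nat \<Rightarrow> nat) \<Rightarrow> (nat \<Rightarrow> nat) \<Rightarrow> nat \<Rightarrow> (nat \<Rightarrow> nat) \<Rightarrow> bool" where
  "pres A \<rho> \<gamma> t p \<longleftrightarrow> (\<forall>a<t. A (\<rho> a) (\<gamma> (p a)))"

definition dterm :: "(nat \<Rightarrow> nat \<Rightarrow> bool) \<Rightarrow> (nat \<Rightarrow> nat) \<Rightarrow> (nat \<Rightarrow> nat) \<Rightarrow> nat \<Rightarrow> 'k::comm_ring_1 mpoly" where
  "dterm A \<rho> \<gamma> t = (\<Sum>p\<in>{p. p permutes {..<t}}.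
     if pres A \<rho> \<gamma> t p then Poly_Mapping.single (pmon \<rho> \<gamma> t p) (of_int (sign p)) else 0)"

lemma mdeg_pmon: "mdeg (pmon \<rho> \<gamma> t p) = t"
  by (simp add: pmon_def mdeg_sum)

lemma prod_singles:
  "(\<Prod>a<(t::nat). if P a then Poly_Mapping.single (ee (h a)) (1::'k::comm_ring_1) else 0)
   = (if (\<forall>a<t. P a) then Poly_Mapping.single (\<Sum>a<t. ee (h a)) 1 else 0)"
proof (induction t)
  case 0
  then show ?case by simp
next
  case (Suc t)
  show ?case
  proof (cases "\<forall>a<Suc t. P a")
    case True
    then have "\<forall>a<t. P a" "P t" by auto
    then show ?thesis using True Suc by (simp add: mult_single lessThan_Suc add.commute)
  next
    case False
    note nP = False
    then obtain a where a: "a < Suc t" "\<not> P a" by auto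
    show ?thesis
    proof (cases "a = t")
      case True
      then show ?thesis using a nP by (auto simp: lessThan_Suc)
    next
      case False
      then have "\<not> (\<forall>a<t. P a)" using a less_SucE by metis
      then have "(\<Prod>a<t. if P a then Poly_Mapping.single (ee (h a)) (1::'k) else 0) = 0"
        by (subst Suc.IH) (erule if_not_P)
      then show ?thesis using nP by (auto simp: lessThan_Suc)
    qed
  qed
qed

lemma var_ee: "var i j = Poly_Mapping.single (ee (i, j)) 1"
  by (simp add: var_def ee_def)

lemma prod_var: "(\<Prod>l<(s::nat). var (i l) (j l)) = (Poly_Mapping.single (\<Sum>l<s. ee (i l, j l)) 1 :: 'k::comm_ring_1 mpoly)"
  using prod_singles[where P="\<lambda>_. True" and t=s and h="\<lambda>l. (i l, j l)", where 'k='k] by (simp add: var_ee)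

lemma of_int_single: "(of_int k :: 'k::comm_ring_1 mpoly) * Poly_Mapping.single \<nu> 1 = Poly_Mapping.single \<nu> (of_int k)"
  by (simp add: single_of_int[symmetric] mult_single del: single_of_int)

lemma inj_pick: "inj_on (pick R) {..<card R}"
proof (rule inj_onI)
  fix x y assume "x \<in> {..<card R}" "y \<in> {..<card R}" "pick R x = pick R y"
  then show "x = y"
    by (metis lessThan_iff linorder_neqE_nat pick_mono_le less_irrefl)
qed

lemma gen_mat_dims[simp]: "dim_row (gen_mat A m n) = m" "dim_col (gen_mat A m n) = n"
  by (simp_all add: gen_mat_def)

lemma gen_mat_index: "i < m \<Longrightarrow> j < n \<Longrightarrow> gen_mat A m n $$ (i, j) = (if A i j then var i j else 0)"
  by (simp add: gen_mat_def)

lemma minor_dterm: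
  assumes "g \<in> minors t (gen_mat A m n :: 'k::comm_ring_1 mpoly mat)"
  shows "\<exists>\<rho> \<gamma>. inj_on \<rho> {..<t} \<and> inj_on \<gamma> {..<t} \<and> g = dterm A \<rho> \<gamma> t"
proof -
  obtain R C where RC: "R \<subseteq> {..<m}" "C \<subseteq> {..<n}" "card R = t" "card C = t"
    and g: "g = det (submatrix (gen_mat A m n) R C)"
    using assms unfolding minors_def gen_mat_dims by blast
  let ?G = "gen_mat A m n :: 'k mpoly mat"
  let ?S = "submatrix ?G R C"
  have dG: "dim_row ?G = m" "dim_col ?G = n" by simp_all
  have cR: "{i. i < dim_row ?G \<and> i \<in> R} = R" unfolding dG using RC(1) by blast
  have cC: "{i. i < dim_col ?G \<and> i \<in> C} = C" unfolding dG using RC(2) by blast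
  have S: "?S \<in> carrier_mat t t"
  proof -
    have "dim_row ?S = t" by (simp only: dim_submatrix cR RC(3))
    moreover have "dim_col ?S = t" by (simp only: dim_submatrix cC RC(4))
    ultimately show ?thesis by (simp only: carrier_mat_def mem_Collect_eq conj_absorb)
  qed
  have ent: "?S $$ (a, b) = (if A (pick R a) (pick C b) then Poly_Mapping.single (ee (pick R a, pick C b)) 1 else 0)"
    if "a < t" "b < t" for a b
  proof -
    have "a < card R" "b < card C" using that RC(3,4) by simp_all
    then have "pick R a \<in> R" "pick C b \<in> C" by (simp_all add: pick_in_set_le)
    then have "pick R a < m" "pick C b < n" using RC(1,2) by blast+
    then show ?thesis
    proof -
      have "?S $$ (a, b) = ?G $$ (pick R a, pick C b)"
        by (rule submatrix_index) (simp_all only: cR cC RC(3,4) that)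
      also have "\<dots> = (if A (pick R a) (pick C b) then var (pick R a) (pick C b) else 0)"
        by (rule gen_mat_index) fact+
      finally show ?thesis by (simp add: var_ee)
    qed
  qed
  have "det ?S = dterm A (pick R) (pick C) t"
    unfolding det_def'[OF S] dterm_def atLeast0LessThan
  proof (rule sum.cong[OF refl])
    fix p assume "p \<in> {p. p permutes {..<t}}"
    then have p: "p permutes {..<t}" by simp
    have "(\<Prod>i<t. ?S $$ (i, p i)) = (\<Prod>i<t. if A (pick R i) (pick C (p i)) then Poly_Mapping.single (ee (pick R i, pick C (p i))) 1 else 0)"
    proof (rule prod.cong[OF refl])
      fix x assume x: "x \<in> {..<t}"
      then have "p x < t" using permutes_in_image[OF p, of x] by simp
      then show "?S $$ (x, p x) = (if A (pick R x) (pick C (p x)) then Poly_Mapping.single (ee (pick R x, pick C (p x))) 1 else 0)"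
        using ent[of x "p x"] x by simp
    qed
    also have "\<dots> = (if pres A (pick R) (pick C) t p then Poly_Mapping.single (pmon (pick R) (pick C) t p) 1 else 0)"
      by (subst prod_singles) (auto simp: pres_def pmon_def)
    finally show "of_int (sign p) * (\<Prod>i<t. ?S $$ (i, p i)) =
      (if pres A (pick R) (pick C) t p then Poly_Mapping.single (pmon (pick R) (pick C) t p) (of_int (sign p)) else 0)"
      by (simp add: of_int_single)
  qed
  then show ?thesis using g inj_pick[of R] inj_pick[of C] RC(3,4) by auto
qed

lemma lookup_dterm:
  "Poly_Mapping.lookup (dterm A \<rho> \<gamma> t :: 'k::comm_ring_1 mpoly) \<mu> =
   (\<Sum>p\<in>{p. p permutes {..<t}}. if pres A \<rho> \<gamma> t p \<and> pmon \<rho> \<gamma> t p = \<mu> then of_int (sign p) else 0)"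
  unfolding dterm_def lookup_sum by (intro sum.cong refl) (auto simp: lookup_single)

lemma lookup_ee: "Poly_Mapping.lookup (ee x) y = (if x = y then 1 else 0)"
  by (simp add: ee_def lookup_single)

lemma lookup_pmon:
  assumes \<rho>: "inj_on \<rho> {..<t}" and \<gamma>: "inj_on \<gamma> {..<t}" and p: "p permutes {..<t}"
    and a: "a < t" and b: "b < t"
  shows "Poly_Mapping.lookup (pmon \<rho> \<gamma> t p) (\<rho> a, \<gamma> b) = (if p a = b then 1 else 0)"
proof -
  have "Poly_Mapping.lookup (pmon \<rho> \<gamma> t p) (\<rho> a, \<gamma> b) = (\<Sum>a'<t. if a' = a then (if p a = b then 1 else 0) else 0)"
    unfolding pmon_def lookup_sum
  proof (rule sum.cong[OF refl])
    fix a' assume a': "a' \<in> {..<t}"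
    then have pa': "p a' < t" using permutes_in_image[OF p, of a'] by simp
    have pa: "p a < t" using permutes_in_image[OF p, of a] a by simp
    have "((\<rho> a', \<gamma> (p a')) = (\<rho> a, \<gamma> b)) = (a' = a \<and> p a = b)"
    proof
      assume "(\<rho> a', \<gamma> (p a')) = (\<rho> a, \<gamma> b)"
      then have 1: "\<rho> a' = \<rho> a" and 2: "\<gamma> (p a') = \<gamma> b" by auto
      from 1 have "a' = a" using inj_onD[OF \<rho> 1] a' a by simp
      moreover from 2 have "p a' = b" using inj_onD[OF \<gamma> 2] pa' b by simp
      ultimately show "a' = a \<and> p a = b" by simp
    qed auto
    then show "Poly_Mapping.lookup (ee (\<rho> a', \<gamma> (p a'))) (\<rho> a, \<gamma> b) = (if a' = a then (if p a = b then 1 else 0) else 0)"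
      by (auto simp: lookup_ee)
  qed
  also have "\<dots> = (if p a = b then 1 else 0)" using a by simp
  finally show ?thesis .
qed

lemma lookup_pmon_nz:
  assumes "Poly_Mapping.lookup (pmon \<rho> \<gamma> t p) k \<noteq> 0"
  shows "\<exists>a<t. k = (\<rho> a, \<gamma> (p a))"
proof -
  from assms obtain a where "a \<in> {..<t}" "Poly_Mapping.lookup (ee (\<rho> a, \<gamma> (p a))) k \<noteq> 0"
    unfolding pmon_def lookup_sum by (meson sum.not_neutral_contains_not_neutral)
  then show ?thesis by (auto simp: lookup_ee split: if_splits)
qed

lemma pmon_inj:
  assumes \<rho>: "inj_on \<rho> {..<t}" and \<gamma>: "inj_on \<gamma> {..<t}"
    and p: "p permutes {..<t}" and q: "q permutes {..<t}"
    and eq: "pmon \<rho> \<gamma> t p = pmon \<rho> \<gamma> t q"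
  shows "p = q"
proof
  fix x
  show "p x = q x"
  proof (cases "x < t")
    case True
    have px: "p x < t" using permutes_in_image[OF p, of x] True by simp
    have h1: "Poly_Mapping.lookup (pmon \<rho> \<gamma> t p) (\<rho> x, \<gamma> (p x)) = 1"
      using lookup_pmon[OF \<rho> \<gamma> p True px] by simp
    have h2: "Poly_Mapping.lookup (pmon \<rho> \<gamma> t q) (\<rho> x, \<gamma> (p x)) = (if q x = p x then 1 else 0)"
      by (rule lookup_pmon[OF \<rho> \<gamma> q True px])
    have "(if q x = p x then 1 else 0) = (1::nat)" by (rule trans[OF h2[symmetric] h1[unfolded eq]])
    then show ?thesis by (cases "q x = p x") auto
  next
    case False
    then have "x \<notin> {..<t}" by simp
    then show ?thesis using permutes_not_in[OF p] permutes_not_in[OF q] by metis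
  qed
qed

lemma lookup_dterm_at:
  assumes \<rho>: "inj_on \<rho> {..<t}" and \<gamma>: "inj_on \<gamma> {..<t}"
    and p0: "p0 permutes {..<t}" and pr: "pres A \<rho> \<gamma> t p0"
  shows "Poly_Mapping.lookup (dterm A \<rho> \<gamma> t :: 'k::comm_ring_1 mpoly) (pmon \<rho> \<gamma> t p0) = of_int (sign p0)"
proof -
  have "Poly_Mapping.lookup (dterm A \<rho> \<gamma> t :: 'k mpoly) (pmon \<rho> \<gamma> t p0)
      = (\<Sum>p\<in>{p. p permutes {..<t}}. if p = p0 then of_int (sign p0) else 0)"
    unfolding lookup_dterm
  proof (rule sum.cong[OF refl])
    fix p assume "p \<in> {p. p permutes {..<t}}"
    then have p: "p permutes {..<t}" by simp
    show "(if pres A \<rho> \<gamma> t p \<and> pmon \<rho> \<gamma> t p = pmon \<rho> \<gamma> t p0 then of_int (sign p) else 0) =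
          (if p = p0 then (of_int (sign p0) :: 'k) else 0)"
      using pmon_inj[OF \<rho> \<gamma> p p0] pr by auto
  qed
  also have "\<dots> = of_int (sign p0)" using p0 by (subst sum.delta) (auto intro: finite_permutations)
  finally show ?thesis .
qed

lemma lookup_dterm_nz:
  assumes "Poly_Mapping.lookup (dterm A \<rho> \<gamma> t :: 'k::comm_ring_1 mpoly) \<mu> \<noteq> 0"
  shows "\<exists>p. p permutes {..<t} \<and> pres A \<rho> \<gamma> t p \<and> pmon \<rho> \<gamma> t p = \<mu>"
proof -
  have "(\<Sum>p\<in>{p. p permutes {..<t}}. if pres A \<rho> \<gamma> t p \<and> pmon \<rho> \<gamma> t p = \<mu> then of_int (sign p) else (0::'k)) \<noteq> 0"
    using assms unfolding lookup_dterm .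
  then obtain p where p: "p \<in> {p. p permutes {..<t}}"
    and nz: "(if pres A \<rho> \<gamma> t p \<and> pmon \<rho> \<gamma> t p = \<mu> then of_int (sign p) else (0::'k)) \<noteq> 0"
    by (rule sum.not_neutral_contains_not_neutral)
  have "pres A \<rho> \<gamma> t p \<and> pmon \<rho> \<gamma> t p = \<mu>"
  proof (rule ccontr)
    assume "\<not> (pres A \<rho> \<gamma> t p \<and> pmon \<rho> \<gamma> t p = \<mu>)"
    then have "(if pres A \<rho> \<gamma> t p \<and> pmon \<rho> \<gamma> t p = \<mu> then of_int (sign p) else (0::'k)) = 0"
      by (rule if_not_P)
    with nz show False by contradiction
  qed
  then show ?thesis using p by blast
qed

lemma lookup_mult_dterm:
  fixes c :: "'k::comm_ring_1 mpoly"
  assumes "mdeg \<mu> = t"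
  shows "Poly_Mapping.lookup (c * dterm A \<rho> \<gamma> t) \<mu> = Poly_Mapping.lookup c 0 * Poly_Mapping.lookup (dterm A \<rho> \<gamma> t :: 'k mpoly) \<mu>"
proof -
  have "Poly_Mapping.lookup (c * dterm A \<rho> \<gamma> t) \<mu> =
     (\<Sum>p\<in>{p. p permutes {..<t}}. Poly_Mapping.lookup (c * (if pres A \<rho> \<gamma> t p then Poly_Mapping.single (pmon \<rho> \<gamma> t p) (of_int (sign p)) else 0)) \<mu>)"
    unfolding dterm_def sum_distrib_left lookup_sum ..
  also have "\<dots> = (\<Sum>p\<in>{p. p permutes {..<t}}. Poly_Mapping.lookup c 0 * (if pres A \<rho> \<gamma> t p \<and> pmon \<rho> \<gamma> t p = \<mu> then of_int (sign p) else 0))"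
  proof (rule sum.cong[OF refl])
    fix p
    show "Poly_Mapping.lookup (c * (if pres A \<rho> \<gamma> t p then Poly_Mapping.single (pmon \<rho> \<gamma> t p) (of_int (sign p)) else 0)) \<mu>
       = Poly_Mapping.lookup c 0 * (if pres A \<rho> \<gamma> t p \<and> pmon \<rho> \<gamma> t p = \<mu> then of_int (sign p) else 0)"
    proof -
      have h: "Poly_Mapping.lookup (c * Poly_Mapping.single (pmon \<rho> \<gamma> t p) (of_int (sign p))) \<mu> =
        (if pmon \<rho> \<gamma> t p = \<mu> then Poly_Mapping.lookup c 0 * of_int (sign p) else 0)"
        by (rule lookup_mult_single_hom) (simp add: mdeg_pmon assms)
      show ?thesis by (cases "pres A \<rho> \<gamma> t p") (simp_all add: h)
    qed
  qed
  also have "\<dots> = Poly_Mapping.lookup c 0 * Poly_Mapping.lookup (dterm A \<rho> \<gamma> t :: 'k mpoly) \<mu>"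
    unfolding lookup_dterm sum_distrib_left ..
  finally show ?thesis .
qed

lemma pmon_split:
  assumes "x1 \<noteq> x2" "x1 < t" "x2 < t"
  shows "pmon \<rho> \<gamma> t p = ee (\<rho> x1, \<gamma> (p x1)) + ee (\<rho> x2, \<gamma> (p x2)) +
     (\<Sum>a\<in>{..<t} - {x1, x2}. ee (\<rho> a, \<gamma> (p a)))"
proof -
  have "pmon \<rho> \<gamma> t p = ee (\<rho> x1, \<gamma> (p x1)) + (\<Sum>a\<in>{..<t} - {x1}. ee (\<rho> a, \<gamma> (p a)))"
    unfolding pmon_def using assms by (simp add: sum.remove)
  also have "(\<Sum>a\<in>{..<t} - {x1}. ee (\<rho> a, \<gamma> (p a))) = ee (\<rho> x2, \<gamma> (p x2)) + (\<Sum>a\<in>{..<t} - {x1} - {x2}. ee (\<rho> a, \<gamma> (p a)))"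
    using assms by (subst sum.remove[of _ x2]) auto
  also have "{..<t} - {x1} - {x2} = {..<t} - {x1, x2}" by auto
  finally show ?thesis by (simp add: add.assoc)
qed

lemma swap_perm:
  assumes \<rho>: "inj_on \<rho> {..<t}" and \<gamma>: "inj_on \<gamma> {..<t}" and p0: "p0 permutes {..<t}"
    and pr: "pres A \<rho> \<gamma> t p0"
    and eq: "pmon \<rho> \<gamma> t p0 = \<nu> + ee (a1, b1) + ee (a2, b2)"
    and ne: "a1 \<noteq> a2" and A12: "A a1 b2" and A21: "A a2 b1"
  shows "\<exists>p1. p1 permutes {..<t} \<and> pres A \<rho> \<gamma> t p1 \<and>
    pmon \<rho> \<gamma> t p1 = \<nu> + ee (a1, b2) + ee (a2, b1) \<and> sign p1 = - sign p0"
proof -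
  have "Poly_Mapping.lookup (pmon \<rho> \<gamma> t p0) (a1, b1) \<noteq> 0"
    unfolding eq by (simp add: lookup_add lookup_ee)
  then obtain x1 where x1: "x1 < t" "(a1, b1) = (\<rho> x1, \<gamma> (p0 x1))"
    using lookup_pmon_nz by blast
  have "Poly_Mapping.lookup (pmon \<rho> \<gamma> t p0) (a2, b2) \<noteq> 0"
    unfolding eq by (simp add: lookup_add lookup_ee)
  then obtain x2 where x2: "x2 < t" "(a2, b2) = (\<rho> x2, \<gamma> (p0 x2))"
    using lookup_pmon_nz by blast
  have x12: "x1 \<noteq> x2" using x1 x2 ne by auto
  define p1 where "p1 = p0 \<circ> Transposition.transpose x1 x2"
  have p1: "p1 permutes {..<t}"
    unfolding p1_def using x1(1) x2(1)
    by (intro permutes_compose[OF permutes_swap_id p0]) auto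
  have v1: "p1 x1 = p0 x2" and v2: "p1 x2 = p0 x1" by (simp_all add: p1_def)
  have vo: "p1 a = p0 a" if "a \<noteq> x1" "a \<noteq> x2" for a
    using that by (simp add: p1_def)
  have "sign p1 = sign p0 * sign (Transposition.transpose x1 x2)"
    unfolding p1_def
    by (rule sign_compose) (use p0 in \<open>auto intro: permutes_imp_permutation permutation_swap_id\<close>)
  then have sg: "sign p1 = - sign p0" using x12 by (simp add: sign_swap_id)
  have pr1: "pres A \<rho> \<gamma> t p1"
    unfolding pres_def
  proof (intro allI impI)
    fix a assume a: "a < t"
    show "A (\<rho> a) (\<gamma> (p1 a))"
    proof (cases "a = x1")
      case True then show ?thesis using v1 x1 x2 A12 by auto
    next
      case False
      show ?thesis
      proof (cases "a = x2")
        case True then show ?thesis using v2 x1 x2 A21 by auto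
      next
        case False
        then show ?thesis using vo[of a] \<open>a \<noteq> x1\<close> pr a unfolding pres_def by auto
      qed
    qed
  qed
  let ?r = "\<lambda>p. (\<Sum>a\<in>{..<t} - {x1, x2}. ee (\<rho> a, \<gamma> (p a)))"
  have r: "?r p1 = ?r p0" by (rule sum.cong) (auto simp: vo)
  have s0: "pmon \<rho> \<gamma> t p0 = ee (a1, b1) + ee (a2, b2) + ?r p0"
    using pmon_split[OF x12 x1(1) x2(1), of \<rho> \<gamma> p0] x1(2) x2(2) by simp
  have s1: "pmon \<rho> \<gamma> t p1 = ee (a1, b2) + ee (a2, b1) + ?r p0"
    using pmon_split[OF x12 x1(1) x2(1), of \<rho> \<gamma> p1] x1(2) x2(2) v1 v2 r by simp
  have "?r p0 + (ee (a1, b1) + ee (a2, b2)) = \<nu> + (ee (a1, b1) + ee (a2, b2))"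
    using s0 eq by (simp add: ac_simps)
  then have "?r p0 = \<nu>" by (rule pm_add_cancel)
  then have "pmon \<rho> \<gamma> t p1 = \<nu> + ee (a1, b2) + ee (a2, b1)"
    using s1 by (simp add: ac_simps)
  then show ?thesis using p1 pr1 sg by blast
qed

lemma dterm_swap:
  assumes \<rho>: "inj_on \<rho> {..<t}" and \<gamma>: "inj_on \<gamma> {..<t}"
    and ne: "a1 \<noteq> a2" and A11: "A a1 b1" and A22: "A a2 b2" and A12: "A a1 b2" and A21: "A a2 b1"
  shows "Poly_Mapping.lookup (dterm A \<rho> \<gamma> t :: 'k::comm_ring_1 mpoly) (\<nu> + ee (a1, b2) + ee (a2, b1))
       = - Poly_Mapping.lookup (dterm A \<rho> \<gamma> t :: 'k mpoly) (\<nu> + ee (a1, b1) + ee (a2, b2))"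
proof -
  let ?m = "\<nu> + ee (a1, b1) + ee (a2, b2)"
  let ?m' = "\<nu> + ee (a1, b2) + ee (a2, b1)"
  let ?L = "\<lambda>\<mu>. Poly_Mapping.lookup (dterm A \<rho> \<gamma> t :: 'k mpoly) \<mu>"
  show ?thesis
proof (cases "?L ?m = 0")
  case False
  then obtain p0 where p0: "p0 permutes {..<t}" "pres A \<rho> \<gamma> t p0" "pmon \<rho> \<gamma> t p0 = ?m"
    using lookup_dterm_nz by blast
  from swap_perm[OF \<rho> \<gamma> p0(1,2) p0(3) ne A12 A21] obtain p1 where
    p1: "p1 permutes {..<t}" "pres A \<rho> \<gamma> t p1" "pmon \<rho> \<gamma> t p1 = ?m'" "sign p1 = - sign p0"
    by blast
  have "?L ?m = of_int (sign p0)" using lookup_dterm_at[OF \<rho> \<gamma> p0(1,2)] p0(3) by simp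
  moreover have "?L ?m' = of_int (sign p1)" using lookup_dterm_at[OF \<rho> \<gamma> p1(1,2)] p1(3) by simp
  ultimately show ?thesis using p1(4) by simp
next
  case True
  show ?thesis
  proof (cases "?L ?m' = 0")
    case True
    then show ?thesis using \<open>?L ?m = 0\<close> by simp
  next
    case False
    then obtain p0 where p0: "p0 permutes {..<t}" "pres A \<rho> \<gamma> t p0" "pmon \<rho> \<gamma> t p0 = ?m'"
      using lookup_dterm_nz by blast
    from swap_perm[OF \<rho> \<gamma> p0(1,2) p0(3) ne A11 A22] obtain p1 where
      p1: "p1 permutes {..<t}" "pres A \<rho> \<gamma> t p1" "pmon \<rho> \<gamma> t p1 = ?m" "sign p1 = - sign p0"
      by blast
    have "?L ?m' = of_int (sign p0)" using lookup_dterm_at[OF \<rho> \<gamma> p0(1,2)] p0(3) by simp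
    moreover have "?L ?m = of_int (sign p1)" using lookup_dterm_at[OF \<rho> \<gamma> p1(1,2)] p1(3) by simp
    ultimately show ?thesis using p1(4) by simp
  qed
qed
qed

lemma lookup_sum_ee_ge:
  assumes "l < s"
  shows "Poly_Mapping.lookup (\<Sum>l<(s::nat). ee (i l, j l)) (i l, j l) \<ge> 1"
proof -
  have "1 = Poly_Mapping.lookup (ee (i l, j l)) (i l, j l)" by (simp add: lookup_ee)
  also have "\<dots> \<le> (\<Sum>l'<s. Poly_Mapping.lookup (ee (i l', j l')) (i l, j l))"
    by (rule member_le_sum) (use assms in auto)
  finally show ?thesis by (simp add: lookup_sum)
qed

lemma dterm_distinct:
  assumes \<rho>: "inj_on \<rho> {..<t}" and \<gamma>: "inj_on \<gamma> {..<t}"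
    and nz: "Poly_Mapping.lookup (dterm A \<rho> \<gamma> t :: 'k::comm_ring_1 mpoly) (\<Sum>l<(s::nat). ee (i l, j l)) \<noteq> 0"
    and l: "l < s" "l' < s" "l \<noteq> l'"
  shows "i l \<noteq> i l' \<and> j l \<noteq> j l'"
proof -
  obtain p0 where p0: "p0 permutes {..<t}" "pres A \<rho> \<gamma> t p0" and eq: "pmon \<rho> \<gamma> t p0 = (\<Sum>l<s. ee (i l, j l))"
    using lookup_dterm_nz[OF nz] by blast
  have "Poly_Mapping.lookup (pmon \<rho> \<gamma> t p0) (i l, j l) \<noteq> 0"
    using lookup_sum_ee_ge[OF l(1), of i j] unfolding eq by linarith
  then obtain a where a: "a < t" "(i l, j l) = (\<rho> a, \<gamma> (p0 a))" using lookup_pmon_nz by blast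
  have "Poly_Mapping.lookup (pmon \<rho> \<gamma> t p0) (i l', j l') \<noteq> 0"
    using lookup_sum_ee_ge[OF l(2), of i j] unfolding eq by linarith
  then obtain a' where a': "a' < t" "(i l', j l') = (\<rho> a', \<gamma> (p0 a'))" using lookup_pmon_nz by blast
  have pa: "p0 a < t" using permutes_in_image[OF p0(1), of a] a(1) by simp
  have pa': "p0 a' < t" using permutes_in_image[OF p0(1), of a'] a'(1) by simp
  show ?thesis
  proof (rule ccontr)
    assume "\<not> (i l \<noteq> i l' \<and> j l \<noteq> j l')"
    then have "\<rho> a = \<rho> a' \<or> \<gamma> (p0 a) = \<gamma> (p0 a')" using a a' by auto
    then have "a = a'"
    proof
      assume "\<rho> a = \<rho> a'"
      then show "a = a'" using inj_onD[OF \<rho>] a(1) a'(1) by simp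
    next
      assume "\<gamma> (p0 a) = \<gamma> (p0 a')"
      then have "p0 a = p0 a'" using inj_onD[OF \<gamma>] pa pa' by simp
      then show "a = a'" using permutes_inj[OF p0(1)] by (simp add: inj_eq)
    qed
    then have same: "(i l', j l') = (i l, j l)" using a a' by simp
    have "2 = Poly_Mapping.lookup (ee (i l, j l)) (i l, j l) + Poly_Mapping.lookup (ee (i l', j l')) (i l, j l)"
      using same by (simp add: lookup_ee)
    also have "\<dots> = (\<Sum>l''\<in>{l, l'}. Poly_Mapping.lookup (ee (i l'', j l'')) (i l, j l))"
      using l(3) by simp
    also have "\<dots> \<le> (\<Sum>l''<s. Poly_Mapping.lookup (ee (i l'', j l'')) (i l, j l))"
      by (rule sum_mono2) (use l in auto)
    also have "\<dots> = Poly_Mapping.lookup (pmon \<rho> \<gamma> t p0) (i l, j l)"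
      unfolding eq lookup_sum ..
    also have "\<dots> = 1"
      using lookup_pmon[OF \<rho> \<gamma> p0(1) a(1) pa] a(2) by simp
    finally show False by simp
  qed
qed

lemma minor_mult:
  assumes "g \<in> minors t (gen_mat A m n :: 'k::comm_ring_1 mpoly mat)" "mdeg \<mu> = t"
  shows "Poly_Mapping.lookup (c * g) \<mu> = Poly_Mapping.lookup c 0 * Poly_Mapping.lookup g \<mu>"
  using minor_dterm[OF assms(1)] lookup_mult_dterm[OF assms(2)] by auto

lemma minor_swap:
  assumes "g \<in> minors t (gen_mat A m n :: 'k::comm_ring_1 mpoly mat)"
    and "a1 \<noteq> a2" "A a1 b1" "A a2 b2" "A a1 b2" "A a2 b1"
  shows "Poly_Mapping.lookup g (\<nu> + ee (a1, b2) + ee (a2, b1)) = - Poly_Mapping.lookup g (\<nu> + ee (a1, b1) + ee (a2, b2))"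
  using minor_dterm[OF assms(1)] dterm_swap[OF _ _ assms(2-6)] by auto

lemma minor_distinct:
  assumes "g \<in> minors t (gen_mat A m n :: 'k::comm_ring_1 mpoly mat)"
    and "Poly_Mapping.lookup g (\<Sum>l<(s::nat). ee (i l, j l)) \<noteq> 0"
    and "l < s" "l' < s" "l \<noteq> l'"
  shows "i l \<noteq> i l' \<and> j l \<noteq> j l'"
proof -
  obtain \<rho> \<gamma> where r: "inj_on \<rho> {..<t}" "inj_on \<gamma> {..<t}" and g: "g = dterm A \<rho> \<gamma> t"
    using minor_dterm[OF assms(1)] by blast
  have "Poly_Mapping.lookup (dterm A \<rho> \<gamma> t :: 'k mpoly) (\<Sum>l<(s::nat). ee (i l, j l)) \<noteq> 0"
    using assms(2) g by simp
  from dterm_distinct[OF r this assms(3-5)] show ?thesis .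
qed

theorem theorem4p13:
  fixes A :: "nat \<Rightarrow> nat \<Rightarrow> bool" and m n s :: nat
    and i j :: "nat \<Rightarrow> nat"
  assumes "s \<ge> 2"
    and "\<forall>l<s. i l < m \<and> j l < n \<and> A (i l) (j l)"
    and "(\<Prod>l<s. var (i l) (j l)) \<in> (I_t A m n s :: 'k::field mpoly set)"
  shows "isolated_set A m n {(i l, j l) | l. l < s}"
proof -
  let ?T = "{(i l, j l) | l. l < s}"
  let ?P = "(\<Prod>l<s. var (i l) (j l)) :: 'k mpoly"
  let ?\<mu>0 = "\<Sum>l<s. ee (i l, j l)"
  have P: "?P = Poly_Mapping.single ?\<mu>0 1" by (rule prod_var)
  from assms(3) obtain F c where F: "finite F" "F \<subseteq> minors s (gen_mat A m n)"
    and Peq: "?P = (\<Sum>g\<in>F. c g * g)"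
    unfolding I_t_def by blast
  have d0: "mdeg ?\<mu>0 = s" by (simp add: mdeg_sum)
  have coef: "Poly_Mapping.lookup ?P \<mu> = (\<Sum>g\<in>F. Poly_Mapping.lookup (c g) 0 * Poly_Mapping.lookup g \<mu>)"
    if "mdeg \<mu> = s" for \<mu>
    unfolding Peq lookup_sum
  proof (rule sum.cong[OF refl])
    fix g assume "g \<in> F"
    then have "g \<in> minors s (gen_mat A m n)" using F(2) by blast
    then show "Poly_Mapping.lookup (c g * g) \<mu> = Poly_Mapping.lookup (c g) 0 * Poly_Mapping.lookup g \<mu>"
      by (rule minor_mult) (rule that)
  qed
  have one: "Poly_Mapping.lookup ?P ?\<mu>0 = 1" unfolding P by simp
  then have "(\<Sum>g\<in>F. Poly_Mapping.lookup (c g) 0 * Poly_Mapping.lookup g ?\<mu>0) \<noteq> 0"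
    using coef[OF d0] by simp
  then obtain g0 where g0F: "g0 \<in> F" and "Poly_Mapping.lookup (c g0) 0 * Poly_Mapping.lookup g0 ?\<mu>0 \<noteq> 0"
    by (rule sum.not_neutral_contains_not_neutral)
  then have g0: "g0 \<in> minors s (gen_mat A m n)" "Poly_Mapping.lookup g0 ?\<mu>0 \<noteq> 0"
    using F(2) by auto
  have dist: "i l \<noteq> i l' \<and> j l \<noteq> j l'" if "l < s" "l' < s" "l \<noteq> l'" for l l'
    by (rule minor_distinct[OF g0 that])
  show ?thesis
    unfolding isolated_set_def
  proof (intro conjI disjI2 ballI impI)
    show "?T \<subseteq> {(i, j). i < m \<and> j < n \<and> A i j}" using assms(2) by auto
  next
    fix p q assume "p \<in> ?T" "q \<in> ?T" "p \<noteq> q"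
    then obtain l1 l2 where l: "l1 < s" "l2 < s" and pq: "p = (i l1, j l1)" "q = (i l2, j l2)"
      by blast
    with \<open>p \<noteq> q\<close> have l12: "l1 \<noteq> l2" by auto
    define a1 b1 a2 b2 where "a1 = i l1" "b1 = j l1" "a2 = i l2" "b2 = j l2"
    note ab = this
    have A11: "A a1 b1" and A22: "A a2 b2" using assms(2) l ab by auto
    have ne: "a1 \<noteq> a2" "b1 \<noteq> b2" using dist[OF l l12] ab by auto
    have "\<not> (A a1 b2 \<and> A a2 b1)"
    proof
      assume "A a1 b2 \<and> A a2 b1"
      then have A12: "A a1 b2" and A21: "A a2 b1" by auto
      define \<nu> where "\<nu> = (\<Sum>l\<in>{..<s} - {l1, l2}. ee (i l, j l))"
      have split: "?\<mu>0 = \<nu> + ee (a1, b1) + ee (a2, b2)"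
        using pmon_split[OF l12 l, of i j id] unfolding pmon_def \<nu>_def ab by (simp add: ac_simps)
      let ?\<mu>' = "\<nu> + ee (a1, b2) + ee (a2, b1)"
      have "mdeg ?\<mu>' = mdeg ?\<mu>0" unfolding split by (simp add: mdeg_add)
      then have d': "mdeg ?\<mu>' = s" using d0 by simp
      have "Poly_Mapping.lookup ?P ?\<mu>' = (\<Sum>g\<in>F. Poly_Mapping.lookup (c g) 0 * Poly_Mapping.lookup g ?\<mu>')"
        by (rule coef[OF d'])
      also have "\<dots> = (\<Sum>g\<in>F. - (Poly_Mapping.lookup (c g) 0 * Poly_Mapping.lookup g ?\<mu>0))"
      proof (rule sum.cong[OF refl])
        fix g assume "g \<in> F"
        then have "g \<in> minors s (gen_mat A m n)" using F(2) by blast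
        from minor_swap[OF this ne(1) A11 A22 A12 A21, of \<nu>]
        show "Poly_Mapping.lookup (c g) 0 * Poly_Mapping.lookup g ?\<mu>' = - (Poly_Mapping.lookup (c g) 0 * Poly_Mapping.lookup g ?\<mu>0)"
          unfolding split by simp
      qed
      also have "\<dots> = - Poly_Mapping.lookup ?P ?\<mu>0"
        using coef[OF d0] by (simp add: sum_negf)
      also have "\<dots> = -1" using one by simp
      finally have m1: "Poly_Mapping.lookup ?P ?\<mu>' = -1" .
      have "Poly_Mapping.lookup ?\<mu>0 (a1, b2) \<noteq> Poly_Mapping.lookup ?\<mu>' (a1, b2)"
        unfolding split using ne by (simp add: lookup_add lookup_ee)
      then have "?\<mu>0 \<noteq> ?\<mu>'" by metis
      then have "Poly_Mapping.lookup ?P ?\<mu>' = 0" unfolding P by (simp add: lookup_single)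
      with m1 show False by simp
    qed
    then show "isolated_pair A p q"
      unfolding isolated_pair_def pq using A11 A22 ab by simp
  qed
qed

end
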